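(* Let $A$ be a T-brace and suppose that $a\in\zeta_n(\star,A)$ for some natural number $n$. Let $a_1=a$ and $a_{i+1}=a_i\star a_i$ for all $i\geq 1$. Then (i) $\mathbf{br}(a)$ is an ideal of $A$ and $\mathbf{br}(a)=\langle a_1\rangle+\langle a_2\rangle+\dots+\langle a_n\rangle$; (ii) if the additive group of $\zeta(\star,A)$ is torsion-free, then $\mathbf{br}(a)=\langle a_1\rangle\oplus\langle a_2\rangle\oplus\dots\oplus\langle a_n\rangle$. Here $\langle x\rangle$ denotes the cyclic subgroup of $(A,+)$ generated by $x$.
   Context: A (left) brace is a set $A$ with two operations $+$ and $\cdot$ such that $(A,+)$ is an abelian group, $(A,\cdot)$ is a group, and $a(b+c)=ab+ac-a$ for all $a,b,c\in A$. Put $a\star b=ab-a-b$. A subbrace is a subset which is a subgroup of both $(A,+)$ and $(A,\cdot)$; $\mathbf{br}(a)$ is the intersection of all subbraces containing $a$. A subbrace $L$ is an ideal if $a\star z, z\star a\in L$ for all $a\in A$, $z\in L$, and then the quotient brace $A/L$ is defined. $A$ is a T-brace if whenever $I$ is an ideal of $J$ and $J$ is an ideal of $A$, then $I$ is an ideal of $A$. The $\star$-center is $\zeta(\star,A)=\{a: a\star x=x\star a=0\ \forall x\}$; the upper $\star$-central series is $\zeta_0(\star,A)=0$, $\zeta_{n+1}(\star,A)/\zeta_n(\star,A)=\zeta(\star,A/\zeta_n(\star,A))$. *)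

theory Defs
  imports "HOL-Algebra.Algebra"
begin

text \<open>A (left) brace given by its carrier, addition, multiplication and the two
neutral elements (the brace axioms force them to coincide).\<close>

record 'a brace_struct =
  bcar  :: "'a set"
  badd  :: "'a \<Rightarrow> 'a \<Rightarrow> 'a"
  bmul  :: "'a \<Rightarrow> 'a \<Rightarrow> 'a"
  bzero :: 'a
  bone  :: 'a

definition add_group :: "('a, 'b) brace_struct_scheme \<Rightarrow> 'a monoid" where
  "add_group B = \<lparr>carrier = bcar B, monoid.mult = badd B, one = bzero B\<rparr>"

definition mul_group :: "('a, 'b) brace_struct_scheme \<Rightarrow> 'a monoid" where
  "mul_group B = \<lparr>carrier = bcar B, monoid.mult = bmul B, one = bone B\<rparr>"

definition bneg :: "('a, 'b) brace_struct_scheme \<Rightarrow> 'a \<Rightarrow> 'a" where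
  "bneg B x = inv\<^bsub>add_group B\<^esub> x"

definition bsub :: "('a, 'b) brace_struct_scheme \<Rightarrow> 'a \<Rightarrow> 'a \<Rightarrow> 'a" where
  "bsub B x y = badd B x (bneg B y)"

definition is_brace :: "('a, 'b) brace_struct_scheme \<Rightarrow> bool" where
  "is_brace B \<longleftrightarrow> comm_group (add_group B) \<and> group (mul_group B) \<and>
     (\<forall>a\<in>bcar B. \<forall>b\<in>bcar B. \<forall>c\<in>bcar B.
        bmul B a (badd B b c) = bsub B (badd B (bmul B a b) (bmul B a c)) a)"

definition star :: "('a, 'b) brace_struct_scheme \<Rightarrow> 'a \<Rightarrow> 'a \<Rightarrow> 'a" where
  "star B a b = bsub B (bsub B (bmul B a b) a) b"

definition subbrace :: "'a set \<Rightarrow> ('a, 'b) brace_struct_scheme \<Rightarrow> bool" where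
  "subbrace S B \<longleftrightarrow> subgroup S (add_group B) \<and> subgroup S (mul_group B)"

definition br :: "('a, 'b) brace_struct_scheme \<Rightarrow> 'a \<Rightarrow> 'a set" where
  "br B a = \<Inter> {S. subbrace S B \<and> a \<in> S}"

definition brace_ideal :: "'a set \<Rightarrow> ('a, 'b) brace_struct_scheme \<Rightarrow> bool" where
  "brace_ideal L B \<longleftrightarrow> subbrace L B \<and>
     (\<forall>a\<in>bcar B. \<forall>z\<in>L. star B a z \<in> L \<and> star B z a \<in> L)"

definition restrict_brace :: "('a, 'b) brace_struct_scheme \<Rightarrow> 'a set \<Rightarrow> 'a brace_struct" where
  "restrict_brace B J = \<lparr>bcar = J, badd = badd B, bmul = bmul B, bzero = bzero B, bone = bone B\<rparr>"

definition T_brace :: "('a, 'b) brace_struct_scheme \<Rightarrow> bool" where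
  "T_brace B \<longleftrightarrow> (\<forall>I J. brace_ideal J B \<and> brace_ideal I (restrict_brace B J)
                        \<longrightarrow> brace_ideal I B)"

definition bcoset :: "('a, 'b) brace_struct_scheme \<Rightarrow> 'a \<Rightarrow> 'a set \<Rightarrow> 'a set" where
  "bcoset B a L = {badd B a l | l. l \<in> L}"

definition quot_add :: "('a, 'b) brace_struct_scheme \<Rightarrow> 'a set \<Rightarrow> 'a set \<Rightarrow> 'a set" where
  "quot_add B U V = {badd B u v | u v. u \<in> U \<and> v \<in> V}"

definition quot_mul :: "('a, 'b) brace_struct_scheme \<Rightarrow> 'a set \<Rightarrow> 'a set \<Rightarrow> 'a set" where
  "quot_mul B U V = {bmul B u v | u v. u \<in> U \<and> v \<in> V}"

definition quot_brace :: "('a, 'b) brace_struct_scheme \<Rightarrow> 'a set \<Rightarrow> 'a set brace_struct" where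
  "quot_brace B L =
     \<lparr>bcar = {bcoset B a L | a. a \<in> bcar B},
      badd = quot_add B,
      bmul = quot_mul B,
      bzero = L,
      bone = bcoset B (bone B) L\<rparr>"

definition star_center :: "('a, 'b) brace_struct_scheme \<Rightarrow> 'a set" where
  "star_center B = {a \<in> bcar B. \<forall>x\<in>bcar B. star B a x = bzero B \<and> star B x a = bzero B}"

primrec upper_star_center :: "('a, 'b) brace_struct_scheme \<Rightarrow> nat \<Rightarrow> 'a set" where
  "upper_star_center B 0 = {bzero B}"
| "upper_star_center B (Suc n) =
     {a \<in> bcar B. bcoset B a (upper_star_center B n)
                    \<in> star_center (quot_brace B (upper_star_center B n))}"

definition cyc :: "('a, 'b) brace_struct_scheme \<Rightarrow> 'a \<Rightarrow> 'a set" where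
  "cyc B x = generate (add_group B) {x}"

definition subgroup_sum :: "('a, 'b) brace_struct_scheme \<Rightarrow> (nat \<Rightarrow> 'a set) \<Rightarrow> nat set \<Rightarrow> 'a set" where
  "subgroup_sum B H I =
     {finprod (add_group B) x I | x. \<forall>i\<in>I. x i \<in> H i}"

definition sum_is_direct :: "('a, 'b) brace_struct_scheme \<Rightarrow> (nat \<Rightarrow> 'a set) \<Rightarrow> nat set \<Rightarrow> bool" where
  "sum_is_direct B H I \<longleftrightarrow>
     (\<forall>x. (\<forall>i\<in>I. x i \<in> H i) \<and> finprod (add_group B) x I = bzero B
          \<longrightarrow> (\<forall>i\<in>I. x i = bzero B))"

definition add_torsion_free :: "('a, 'b) brace_struct_scheme \<Rightarrow> 'a set \<Rightarrow> bool" where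
  "add_torsion_free B S \<longleftrightarrow>
     (\<forall>x\<in>S. \<forall>k::nat. k > 0 \<and> x [^]\<^bsub>add_group B\<^esub> k = bzero B \<longrightarrow> x = bzero B)"

end

theory Submission
  imports Defs
begin

locale brace_loc =
  fixes B :: "('a, 'b) brace_struct_scheme"
  assumes isb: "is_brace B"
begin

abbreviation A where "A \<equiv> bcar B"
abbreviation ad (infixl "\<boxplus>" 65) where "x \<boxplus> y \<equiv> badd B x y"
abbreviation mu (infixl "\<boxtimes>" 70) where "x \<boxtimes> y \<equiv> bmul B x y"
abbreviation ng where "ng x \<equiv> bneg B x"
abbreviation st (infixl "\<star>" 75) where "x \<star> y \<equiv> star B x y"
abbreviation z0 where "z0 \<equiv> bzero B"

lemma cg: "comm_group (add_group B)" using isb by (simp add: is_brace_def)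
lemma mg: "group (mul_group B)" using isb by (simp add: is_brace_def)

sublocale AG: comm_group "add_group B" by (rule cg)
sublocale MG: group "mul_group B" by (rule mg)

lemma ag_simps[simp]: "carrier (add_group B) = A" "x \<otimes>\<^bsub>add_group B\<^esub> y = x \<boxplus> y"
   "\<one>\<^bsub>add_group B\<^esub> = z0"
  by (simp_all add: add_group_def)
lemma mg_simps[simp]: "carrier (mul_group B) = A" "x \<otimes>\<^bsub>mul_group B\<^esub> y = x \<boxtimes> y"
   "\<one>\<^bsub>mul_group B\<^esub> = bone B"
  by (simp_all add: mul_group_def)

lemma ng_def': "ng x = inv\<^bsub>add_group B\<^esub> x" by (simp add: bneg_def)

lemma add_closed[simp,intro]: "x \<in> A \<Longrightarrow> y \<in> A \<Longrightarrow> x \<boxplus> y \<in> A"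
  using AG.m_closed by simp
lemma mul_closed[simp,intro]: "x \<in> A \<Longrightarrow> y \<in> A \<Longrightarrow> x \<boxtimes> y \<in> A"
  using MG.m_closed by simp
lemma ng_closed[simp,intro]: "x \<in> A \<Longrightarrow> ng x \<in> A"
  using AG.inv_closed by (simp add: ng_def')
lemma zero_closed[simp,intro]: "z0 \<in> A" using AG.one_closed by simp
lemma add_assoc: "x \<in> A \<Longrightarrow> y \<in> A \<Longrightarrow> z \<in> A \<Longrightarrow> x \<boxplus> y \<boxplus> z = x \<boxplus> (y \<boxplus> z)"
  using AG.m_assoc by simp
lemma add_comm: "x \<in> A \<Longrightarrow> y \<in> A \<Longrightarrow> x \<boxplus> y = y \<boxplus> x"
  using AG.m_comm by simp
lemma add_lcomm: "x \<in> A \<Longrightarrow> y \<in> A \<Longrightarrow> z \<in> A \<Longrightarrow> x \<boxplus> (y \<boxplus> z) = y \<boxplus> (x \<boxplus> z)"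
  using AG.m_lcomm by simp
lemmas add_ac = add_assoc add_comm add_lcomm
lemma add_zero[simp]: "x \<in> A \<Longrightarrow> x \<boxplus> z0 = x" using AG.r_one by simp
lemma zero_add[simp]: "x \<in> A \<Longrightarrow> z0 \<boxplus> x = x" using AG.l_one by simp
lemma add_ng[simp]: "x \<in> A \<Longrightarrow> x \<boxplus> ng x = z0" using AG.r_inv by (simp add: ng_def')
lemma ng_add[simp]: "x \<in> A \<Longrightarrow> ng x \<boxplus> x = z0" using AG.l_inv by (simp add: ng_def')
lemma add_ng_cancel[simp]: "x \<in> A \<Longrightarrow> y \<in> A \<Longrightarrow> x \<boxplus> (ng x \<boxplus> y) = y"
  by (simp flip: add_assoc)
lemma ng_add_cancel[simp]: "x \<in> A \<Longrightarrow> y \<in> A \<Longrightarrow> ng x \<boxplus> (x \<boxplus> y) = y"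
  by (simp flip: add_assoc)
lemma ng_ng[simp]: "x \<in> A \<Longrightarrow> ng (ng x) = x" using AG.inv_inv by (simp add: ng_def')
lemma ng_distrib[simp]: "x \<in> A \<Longrightarrow> y \<in> A \<Longrightarrow> ng (x \<boxplus> y) = ng x \<boxplus> ng y"
  using AG.inv_mult by (simp add: ng_def')
lemma ng_zero[simp]: "ng z0 = z0" using AG.inv_one by (simp add: ng_def')

lemma add_left_cancel: "x \<in> A \<Longrightarrow> y \<in> A \<Longrightarrow> z \<in> A \<Longrightarrow> (x \<boxplus> y = x \<boxplus> z) = (y = z)"
  using AG.l_cancel[of x y z] by auto

lemma star_eq: "x \<star> y = x \<boxtimes> y \<boxplus> ng x \<boxplus> ng y"
  by (simp add: star_def bsub_def)

lemma dist: "x \<in> A \<Longrightarrow> y \<in> A \<Longrightarrow> z \<in> A \<Longrightarrow> x \<boxtimes> (y \<boxplus> z) = x \<boxtimes> y \<boxplus> x \<boxtimes> z \<boxplus> ng x"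
  using isb by (simp add: is_brace_def bsub_def)

abbreviation mi where "mi x \<equiv> inv\<^bsub>mul_group B\<^esub> x"
lemma mi_closed[simp,intro]: "x \<in> A \<Longrightarrow> mi x \<in> A" using MG.inv_closed by simp
lemma mul_assoc: "x \<in> A \<Longrightarrow> y \<in> A \<Longrightarrow> z \<in> A \<Longrightarrow> x \<boxtimes> y \<boxtimes> z = x \<boxtimes> (y \<boxtimes> z)"
  using MG.m_assoc by simp

lemma mul_zero_r[simp]: assumes "x \<in> A" shows "x \<boxtimes> z0 = x"
proof -
  have "x \<boxtimes> (z0 \<boxplus> z0) = x \<boxtimes> z0 \<boxplus> x \<boxtimes> z0 \<boxplus> ng x" using dist[OF assms zero_closed zero_closed] by simp
  hence "x \<boxtimes> z0 = x \<boxtimes> z0 \<boxplus> (x \<boxtimes> z0 \<boxplus> ng x)" using assms by (simp add: add_assoc)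
  hence "x \<boxtimes> z0 \<boxplus> z0 = x \<boxtimes> z0 \<boxplus> (x \<boxtimes> z0 \<boxplus> ng x)" using assms by simp
  hence "z0 = x \<boxtimes> z0 \<boxplus> ng x" using assms add_left_cancel by (metis add_closed mul_closed ng_closed zero_closed)
  hence "z0 \<boxplus> x = x \<boxtimes> z0 \<boxplus> ng x \<boxplus> x" by simp
  thus ?thesis using assms by (simp add: add_assoc)
qed

lemma one_zero[simp]: "bone B = z0"
proof -
  have "bone B \<boxtimes> z0 = z0" using MG.l_one by simp
  moreover have "bone B \<in> A" using MG.one_closed by simp
  ultimately show ?thesis using mul_zero_r by metis
qed

lemma mul_one_l[simp]: "x \<in> A \<Longrightarrow> z0 \<boxtimes> x = x" using MG.l_one by simp
lemma mi_r[simp]: "x \<in> A \<Longrightarrow> x \<boxtimes> mi x = z0" using MG.r_inv by simp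
lemma mi_l[simp]: "x \<in> A \<Longrightarrow> mi x \<boxtimes> x = z0" using MG.l_inv by simp

lemma star_closed[simp,intro]: "x \<in> A \<Longrightarrow> y \<in> A \<Longrightarrow> x \<star> y \<in> A"
  by (simp add: star_eq)

lemma mul_eq: "x \<in> A \<Longrightarrow> y \<in> A \<Longrightarrow> x \<boxtimes> y = x \<boxplus> y \<boxplus> x \<star> y"
  by (simp add: star_eq add_ac)

lemma star_add_r: "x \<in> A \<Longrightarrow> y \<in> A \<Longrightarrow> z \<in> A \<Longrightarrow> x \<star> (y \<boxplus> z) = x \<star> y \<boxplus> x \<star> z"
  by (simp add: star_eq dist add_ac)

lemma star_zero_r[simp]: "x \<in> A \<Longrightarrow> x \<star> z0 = z0" by (simp add: star_eq)
lemma star_zero_l[simp]: "x \<in> A \<Longrightarrow> z0 \<star> x = z0" by (simp add: star_eq)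

lemma star_ng_r: assumes "x \<in> A" "y \<in> A" shows "x \<star> ng y = ng (x \<star> y)"
proof -
  have h: "x \<star> y \<boxplus> x \<star> ng y = z0" using assms star_add_r[of x y "ng y"] by simp
  have "x \<star> ng y = ng (x \<star> y) \<boxplus> (x \<star> y \<boxplus> x \<star> ng y)" using assms by simp
  thus ?thesis using h assms by simp
qed

definition lam where "lam x y = x \<boxtimes> y \<boxplus> ng x"
lemma lam_closed[simp]: "x \<in> A \<Longrightarrow> y \<in> A \<Longrightarrow> lam x y \<in> A" by (simp add: lam_def)
lemma lam_add: "x \<in> A \<Longrightarrow> y \<in> A \<Longrightarrow> z \<in> A \<Longrightarrow> lam x (y \<boxplus> z) = lam x y \<boxplus> lam x z"
  by (simp add: lam_def dist add_ac)
lemma lam_ng: assumes "x \<in> A" "y \<in> A" shows "lam x (ng y) = ng (lam x y)"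
proof -
  have h: "lam x y \<boxplus> lam x (ng y) = z0" using assms lam_add[of x y "ng y"] by (simp add: lam_def)
  have "lam x (ng y) = ng (lam x y) \<boxplus> (lam x y \<boxplus> lam x (ng y))" using assms by simp
  thus ?thesis using h assms by simp
qed
lemma lam_mul: assumes "x \<in> A" "y \<in> A" "z \<in> A" shows "lam (x \<boxtimes> y) z = lam x (lam y z)"
proof -
  have "lam x (lam y z) = lam x (y \<boxtimes> z) \<boxplus> ng (lam x y)"
    using assms by (simp add: lam_def[of y z] lam_add lam_ng)
  thus ?thesis using assms by (simp add: lam_def mul_assoc add_ac)
qed
lemma star_lam: "x \<in> A \<Longrightarrow> y \<in> A \<Longrightarrow> x \<star> y = lam x y \<boxplus> ng y"
  by (simp add: star_eq lam_def)

lemma star_mul_l: assumes "x \<in> A" "y \<in> A" "z \<in> A"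
  shows "(x \<boxtimes> y) \<star> z = x \<star> (y \<star> z) \<boxplus> x \<star> z \<boxplus> y \<star> z"
  using assms by (simp add: star_lam lam_mul lam_add lam_ng add_ac)

lemma add_as_mul: assumes "x \<in> A" "c \<in> A" shows "x \<boxplus> c = x \<boxtimes> (c \<boxplus> mi x \<star> c)"
proof -
  have "c \<boxplus> mi x \<star> c = lam (mi x) c" using assms by (simp add: star_lam add_ac)
  have e: "\<And>w. w \<in> A \<Longrightarrow> x \<boxtimes> w = x \<boxplus> lam x w" using assms by (simp add: lam_def add_ac)
  have "x \<boxtimes> (c \<boxplus> mi x \<star> c) = x \<boxplus> lam x (lam (mi x) c)"
    using assms by (simp add: e \<open>c \<boxplus> mi x \<star> c = lam (mi x) c\<close>)
  also have "\<dots> = x \<boxplus> lam z0 c" using assms by (simp flip: lam_mul)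
  also have "\<dots> = x \<boxplus> c" using assms by (simp add: lam_def)
  finally show ?thesis by simp
qed

lemma inv_unique: assumes "x \<in> A" "y \<in> A" "x \<boxplus> y = z0" shows "x = ng y"
proof -
  have "x = x \<boxplus> (y \<boxplus> ng y)" by (simp only: add_ng[OF assms(2)] add_zero[OF assms(1)])
  also have "\<dots> = (x \<boxplus> y) \<boxplus> ng y" by (rule sym, rule add_assoc) (use assms in auto)
  also have "\<dots> = ng y" using assms by simp
  finally show ?thesis .
qed

lemma mi_eq: assumes "a \<in> A" shows "mi a = ng a \<boxplus> ng (mi a \<star> a)"
proof -
  have "mi a \<boxplus> (a \<boxplus> mi a \<star> a) = z0" using assms mul_eq[of "mi a" a] by (simp add: add_assoc)
  thus ?thesis using inv_unique[of "mi a" "a \<boxplus> mi a \<star> a"] assms by simp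
qed

lemma mi_eq': assumes "a \<in> A" shows "ng a = mi a \<boxplus> mi a \<star> a"
proof -
  have "mi a \<boxplus> mi a \<star> a = (ng a \<boxplus> ng (mi a \<star> a)) \<boxplus> mi a \<star> a"
    using mi_eq[OF assms] by (rule arg_cong)
  also have "\<dots> = ng a" using assms by (simp add: add_assoc)
  finally show ?thesis by simp
qed

section \<open>Ideals\<close>

definition Zc where "Zc L = {a \<in> A. \<forall>x\<in>A. a \<star> x \<in> L \<and> x \<star> a \<in> L}"

context
  fixes L assumes LI: "brace_ideal L B"
begin
lemma LI_add_sg: "subgroup L (add_group B)" using LI by (simp add: brace_ideal_def subbrace_def)
lemma LI_mul_sg: "subgroup L (mul_group B)" using LI by (simp add: brace_ideal_def subbrace_def)
lemma I_sub: "L \<subseteq> A" using subgroup.subset[OF LI_add_sg] by simp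
lemma I_in: "l \<in> L \<Longrightarrow> l \<in> A" using I_sub by auto
lemma I_zero[simp]: "z0 \<in> L" using subgroup.one_closed[OF LI_add_sg] by simp
lemma I_add: "x \<in> L \<Longrightarrow> y \<in> L \<Longrightarrow> x \<boxplus> y \<in> L" using subgroup.m_closed[OF LI_add_sg] by simp
lemma I_ng: "x \<in> L \<Longrightarrow> ng x \<in> L" using subgroup.m_inv_closed[OF LI_add_sg] by (simp add: ng_def')
lemma I_mul: "x \<in> L \<Longrightarrow> y \<in> L \<Longrightarrow> x \<boxtimes> y \<in> L" using subgroup.m_closed[OF LI_mul_sg] by simp
lemma I_mi: "x \<in> L \<Longrightarrow> mi x \<in> L" using subgroup.m_inv_closed[OF LI_mul_sg] by simp
lemma I_starl: "x \<in> A \<Longrightarrow> l \<in> L \<Longrightarrow> x \<star> l \<in> L" using LI by (simp add: brace_ideal_def)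
lemma I_starr: "x \<in> A \<Longrightarrow> l \<in> L \<Longrightarrow> l \<star> x \<in> L" using LI by (simp add: brace_ideal_def)

lemma solve_mid: assumes "p \<boxplus> q \<boxplus> r = z0" "p \<in> L" "r \<in> L" "q \<in> A" shows "q \<in> L"
proof -
  have p: "p \<in> A" and r: "r \<in> A" using assms I_in by auto
  have "q \<boxplus> (p \<boxplus> r) = z0" using assms p r by (simp add: add_ac)
  hence "q = ng (p \<boxplus> r)" using inv_unique p r assms by simp
  thus ?thesis using assms I_ng I_add by simp
qed

lemma I_mulr: assumes "x \<in> A" "l \<in> L" shows "\<exists>l'\<in>L. x \<boxtimes> l = x \<boxplus> l'"
  using assms I_add I_starl I_in mul_eq[of x l] by (intro bexI[of _ "l \<boxplus> x \<star> l"]) (auto simp: add_assoc)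

lemma I_addmul: assumes "x \<in> A" "l \<in> L" shows "\<exists>l'\<in>L. x \<boxplus> l = x \<boxtimes> l'"
  using assms I_add I_starl I_in add_as_mul[of x l] by (intro bexI[of _ "l \<boxplus> mi x \<star> l"]) auto

lemma I_normal: assumes "w \<in> A" "l \<in> L" shows "mi w \<boxtimes> l \<boxtimes> w \<in> L"
proof -
  have l: "l \<in> A" using assms I_in by auto
  have "l \<boxtimes> w = w \<boxplus> (l \<boxplus> l \<star> w)" using mul_eq[OF l assms(1)] l assms by (simp add: add_ac)
  moreover obtain l'' where "l'' \<in> L" "w \<boxplus> (l \<boxplus> l \<star> w) = w \<boxtimes> l''"
    using I_addmul[of w "l \<boxplus> l \<star> w"] assms I_add I_starr l by auto
  ultimately have "mi w \<boxtimes> l \<boxtimes> w = l''" using assms l I_in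
    by (simp add: mul_assoc flip: mul_assoc[of "mi w" w l''])
  thus ?thesis using \<open>l'' \<in> L\<close> by simp
qed

lemma I_normal': assumes "w \<in> A" "l \<in> L" shows "w \<boxtimes> l \<boxtimes> mi w \<in> L"
  using I_normal[of "mi w" l] assms MG.inv_inv[of w] by simp

lemma star_cong0: assumes "u \<in> A" "x \<in> A" "c \<in> A" "c \<star> x \<in> L"
  shows "(u \<boxtimes> c) \<star> x = u \<star> x \<boxplus> (u \<star> (c \<star> x) \<boxplus> c \<star> x) \<and> u \<star> (c \<star> x) \<boxplus> c \<star> x \<in> L"
  using assms star_mul_l[of u c x] I_starl I_add by (simp add: add_ac)

lemma star_congL: assumes "u \<in> A" "x \<in> A" "l \<in> L"
  shows "\<exists>l'\<in>L. (u \<boxplus> l) \<star> x = u \<star> x \<boxplus> l'"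
proof -
  obtain l1 where "l1 \<in> L" "u \<boxplus> l = u \<boxtimes> l1" using I_addmul assms by blast
  thus ?thesis using star_cong0[of u x l1] assms I_in I_starr by auto
qed


lemma L_Zc: "L \<subseteq> (Zc L)" using I_starl I_starr I_in by (auto simp: Zc_def)

lemma Zc_add: assumes "a \<in> (Zc L)" "b \<in> (Zc L)" shows "a \<boxplus> b \<in> (Zc L)"
proof -
  have a: "a \<in> A" and b: "b \<in> A" using assms by (auto simp: Zc_def)
  have "x \<star> (a \<boxplus> b) \<in> L" if "x \<in> A" for x
    using star_add_r[OF that a b] assms that I_add by (simp add: Zc_def)
  moreover have "(a \<boxplus> b) \<star> x \<in> L" if x: "x \<in> A" for x
  proof -
    have ml: "mi a \<star> b \<in> L" using assms by (simp add: Zc_def)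
    obtain l' where l': "l' \<in> L" "(b \<boxplus> mi a \<star> b) \<star> x = b \<star> x \<boxplus> l'"
      using star_congL[OF b x ml] by blast
    have bx: "(b \<boxplus> mi a \<star> b) \<star> x \<in> L" using l' assms x I_add by (simp add: Zc_def)
    have "(a \<boxplus> b) \<star> x = (a \<boxtimes> (b \<boxplus> mi a \<star> b)) \<star> x" using add_as_mul[OF a b] by simp
    thus ?thesis using star_cong0[of a x "b \<boxplus> mi a \<star> b"] a b x bx assms I_add by (simp add: Zc_def)
  qed
  ultimately show ?thesis using a b by (simp add: Zc_def)
qed

lemma Zc_ng: assumes "a \<in> (Zc L)" shows "ng a \<in> (Zc L)"
proof -
  have a: "a \<in> A" using assms by (auto simp: Zc_def)
  have "x \<star> ng a \<in> L" if "x \<in> A" for x using star_ng_r[OF that a] assms that I_ng by (simp add: Zc_def)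
  moreover have "ng a \<star> x \<in> L" if x: "x \<in> A" for x
  proof -
    have "(mi a \<boxtimes> a) \<star> x = z0" using a x by simp
    hence "mi a \<star> (a \<star> x) \<boxplus> mi a \<star> x \<boxplus> a \<star> x = z0" using star_mul_l[of "mi a" a x] a x by simp
    hence m: "mi a \<star> x \<in> L" using solve_mid assms a x I_starl by (simp add: Zc_def)
    have "ng a = mi a \<boxplus> mi a \<star> a" using mi_eq'[OF a] .
    moreover obtain l' where "l' \<in> L" "(mi a \<boxplus> mi a \<star> a) \<star> x = mi a \<star> x \<boxplus> l'"
      using star_congL[of "mi a" x "mi a \<star> a"] a x assms by (auto simp: Zc_def)
    ultimately show ?thesis using m I_add by simp
  qed
  ultimately show ?thesis using a by (simp add: Zc_def)
qed

lemma Zc_ideal: "brace_ideal (Zc L) B"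
proof -
  have sub: "(Zc L) \<subseteq> A" by (auto simp: Zc_def)
  have z: "z0 \<in> (Zc L)" using L_Zc by auto
  have "subgroup (Zc L) (add_group B)"
    by (rule AG.subgroupI) (use sub z Zc_add Zc_ng in \<open>auto simp: ng_def'[symmetric]\<close>)
  moreover have "subgroup (Zc L) (mul_group B)"
  proof (rule MG.subgroupI)
    show "(Zc L) \<subseteq> carrier (mul_group B)" using sub by simp
    show "(Zc L) \<noteq> {}" using z by auto
    fix a b assume a: "a \<in> (Zc L)" and b: "b \<in> (Zc L)"
    have aA: "a \<in> A" "b \<in> A" using a b sub by auto
    have "a \<star> b \<in> (Zc L)" using a aA L_Zc by (auto simp: Zc_def)
    thus "a \<otimes>\<^bsub>mul_group B\<^esub> b \<in> (Zc L)" using mul_eq[OF aA] Zc_add a b by simp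
    have "ng (mi a \<star> a) \<in> (Zc L)" using a aA L_Zc I_ng by (auto simp: Zc_def)
    hence "ng a \<boxplus> ng (mi a \<star> a) \<in> (Zc L)" by (rule Zc_add[OF Zc_ng[OF a]])
    thus "inv\<^bsub>mul_group B\<^esub> a \<in> (Zc L)" using mi_eq[OF aA(1)] by simp
  qed
  moreover have "\<forall>a\<in>A. \<forall>z\<in>(Zc L). a \<star> z \<in> (Zc L) \<and> z \<star> a \<in> (Zc L)" using L_Zc by (auto simp: Zc_def)
  ultimately show ?thesis by (simp add: brace_ideal_def subbrace_def)
qed

lemma star_cong: assumes "u \<in> A" "x \<in> A" "c \<in> (Zc L)"
  shows "\<exists>l'\<in>L. (u \<boxplus> c) \<star> x = u \<star> x \<boxplus> l'"
proof -
  have c: "c \<in> A" using assms by (simp add: Zc_def)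
  have "mi u \<star> c \<in> (Zc L)" using L_Zc assms by (auto simp: Zc_def)
  hence c1: "c \<boxplus> mi u \<star> c \<in> (Zc L)" using Zc_add assms by simp
  thus ?thesis using add_as_mul[OF assms(1) c] star_cong0[of u x "c \<boxplus> mi u \<star> c"] assms c
    by (auto simp: Zc_def)
qed

end

lemma mi_cancel[simp]: "x \<in> A \<Longrightarrow> z \<in> A \<Longrightarrow> x \<boxtimes> (mi x \<boxtimes> z) = z"
  by (simp flip: mul_assoc)
lemma mi_cancel'[simp]: "x \<in> A \<Longrightarrow> z \<in> A \<Longrightarrow> mi x \<boxtimes> (x \<boxtimes> z) = z"
  by (simp flip: mul_assoc)

section \<open>Quotients\<close>

context
  fixes L assumes LI: "brace_ideal L B"
begin

lemma coset_shift: assumes "a \<in> A" "d \<in> L" shows "bcoset B (a \<boxplus> d) L = bcoset B a L"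
proof -
  have d: "d \<in> A" using I_in[OF LI] assms by auto
  have "(a \<boxplus> d) \<boxplus> l \<in> bcoset B a L" if "l \<in> L" for l
    using that assms d I_add[OF LI] I_in[OF LI, of l] by (auto simp: bcoset_def add_assoc)
  moreover have "a \<boxplus> l \<in> bcoset B (a \<boxplus> d) L" if "l \<in> L" for l
  proof -
    have "a \<boxplus> l = (a \<boxplus> d) \<boxplus> (ng d \<boxplus> l)" using that assms d I_in[OF LI, of l] by (simp add: add_assoc)
    thus ?thesis using that assms I_add[OF LI] I_ng[OF LI] by (auto simp: bcoset_def)
  qed
  ultimately show ?thesis unfolding bcoset_def by blast
qed

lemma coset_zero: "bcoset B z0 L = L"
proof -
  have "x \<in> bcoset B z0 L" if "x \<in> L" for x
    using that I_in[OF LI, of x] unfolding bcoset_def by (intro CollectI exI[of _ x]) simp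
  thus ?thesis using I_in[OF LI] by (auto simp: bcoset_def)
qed

lemma coset_L: assumes "c \<in> A" shows "(bcoset B c L = L) \<longleftrightarrow> c \<in> L"
proof
  assume "bcoset B c L = L"
  moreover have "c \<in> bcoset B c L" using assms I_zero[OF LI] unfolding bcoset_def
    by (auto intro!: exI[of _ z0])
  ultimately show "c \<in> L" by simp
next
  assume "c \<in> L"
  thus "bcoset B c L = L" using coset_shift[of z0 c] coset_zero assms by simp
qed

lemma qadd: assumes "x \<in> A" "y \<in> A"
  shows "quot_add B (bcoset B x L) (bcoset B y L) = bcoset B (x \<boxplus> y) L"
proof -
  have "(x \<boxplus> l) \<boxplus> (y \<boxplus> l') \<in> bcoset B (x \<boxplus> y) L" if "l \<in> L" "l' \<in> L" for l l'
  proof -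
    have "(x \<boxplus> l) \<boxplus> (y \<boxplus> l') = (x \<boxplus> y) \<boxplus> (l \<boxplus> l')"
      using assms that I_in[OF LI] by (simp add: add_ac)
    thus ?thesis using that I_add[OF LI] by (auto simp: bcoset_def)
  qed
  moreover have "(x \<boxplus> y) \<boxplus> l \<in> quot_add B (bcoset B x L) (bcoset B y L)" if "l \<in> L" for l
  proof -
    have "(x \<boxplus> y) \<boxplus> l = (x \<boxplus> l) \<boxplus> (y \<boxplus> z0)"
      using assms that I_in[OF LI] by (simp add: add_ac)
    thus ?thesis using that I_zero[OF LI] unfolding quot_add_def bcoset_def by blast
  qed
  ultimately show ?thesis unfolding quot_add_def bcoset_def by blast
qed

lemma qmul: assumes "x \<in> A" "y \<in> A"
  shows "quot_mul B (bcoset B x L) (bcoset B y L) = bcoset B (x \<boxtimes> y) L"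
proof -
  have "(x \<boxplus> l) \<boxtimes> (y \<boxplus> l') \<in> bcoset B (x \<boxtimes> y) L" if tl: "l \<in> L" and tl': "l' \<in> L" for l l'
  proof -
    obtain l1 where l1: "l1 \<in> L" "x \<boxplus> l = x \<boxtimes> l1" using I_addmul[OF LI assms(1) tl] by blast
    obtain l2 where l2: "l2 \<in> L" "y \<boxplus> l' = y \<boxtimes> l2" using I_addmul[OF LI assms(2) tl'] by blast
    have l12: "l1 \<in> A" "l2 \<in> A" using l1 l2 I_in[OF LI] by auto
    have "(x \<boxplus> l) \<boxtimes> (y \<boxplus> l') = (x \<boxtimes> y) \<boxtimes> ((mi y \<boxtimes> l1 \<boxtimes> y) \<boxtimes> l2)"
      using l1 l2 l12 assms by (simp add: mul_assoc)
    moreover have "(mi y \<boxtimes> l1 \<boxtimes> y) \<boxtimes> l2 \<in> L" using I_normal[OF LI assms(2) l1(1)] l2 I_mul[OF LI] by simp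
    ultimately show ?thesis using I_mulr[OF LI, of "x \<boxtimes> y"] assms by (auto simp: bcoset_def)
  qed
  moreover have "(x \<boxtimes> y) \<boxplus> l \<in> quot_mul B (bcoset B x L) (bcoset B y L)" if "l \<in> L" for l
  proof -
    have l: "l \<in> A" using that I_in[OF LI] by auto
    have m: "lam (mi x) l \<in> L" using star_lam[of "mi x" l] I_starl[OF LI, of "mi x" l] that assms l I_add[OF LI]
      by (metis add_comm add_ng_cancel lam_closed mi_closed ng_closed)
    have "x \<boxtimes> (y \<boxplus> lam (mi x) l) = x \<boxtimes> y \<boxplus> lam x (lam (mi x) l)"
      using assms l by (simp add: dist lam_def add_assoc)
    also have "\<dots> = x \<boxtimes> y \<boxplus> l" using assms l by (simp flip: lam_mul) (simp add: lam_def)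
    finally have "(x \<boxtimes> y) \<boxplus> l = (x \<boxplus> z0) \<boxtimes> (y \<boxplus> lam (mi x) l)" using assms by simp
    thus ?thesis using m I_zero[OF LI] unfolding quot_mul_def bcoset_def by blast
  qed
  ultimately show ?thesis unfolding quot_mul_def bcoset_def by blast
qed

lemma qcar: "bcar (quot_brace B L) = {bcoset B a L | a. a \<in> A}" by (simp add: quot_brace_def)

lemma qneg: assumes "y \<in> A" shows "bneg (quot_brace B L) (bcoset B y L) = bcoset B (ng y) L"
proof -
  have ag: "add_group (quot_brace B L) = \<lparr>carrier = {bcoset B a L | a. a \<in> A}, monoid.mult = quot_add B, one = L\<rparr>"
    by (simp add: add_group_def quot_brace_def)
  have ex: "W = bcoset B (ng y) L" if W: "W \<in> {bcoset B a L | a. a \<in> A}" and q: "quot_add B (bcoset B y L) W = L" for W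
  proof -
    obtain w where w: "W = bcoset B w L" "w \<in> A" using W by blast
    hence "y \<boxplus> w \<in> L" using qadd assms coset_L q by auto
    hence "bcoset B (ng y \<boxplus> (y \<boxplus> w)) L = bcoset B (ng y) L" using coset_shift assms by simp
    thus "W = bcoset B (ng y) L" using w assms by simp
  qed
  show ?thesis unfolding bneg_def[of "quot_brace B L"] ag m_inv_def
    apply (rule the_equality)
    subgoal using assms qadd coset_zero by auto
    subgoal for W using ex by auto
    done
qed

lemma qfields[simp]: "badd (quot_brace B L) = quot_add B" "bmul (quot_brace B L) = quot_mul B"
  "bzero (quot_brace B L) = L"
  by (simp_all add: quot_brace_def)

lemma qsub: assumes "a \<in> A" "x \<in> A"
  shows "bsub (quot_brace B L) (bcoset B a L) (bcoset B x L) = bcoset B (a \<boxplus> ng x) L"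
  unfolding bsub_def qfields using assms by (simp add: qneg qadd)

lemma qstar: assumes "a \<in> A" "x \<in> A"
  shows "star (quot_brace B L) (bcoset B a L) (bcoset B x L) = bcoset B (a \<star> x) L"
  unfolding star_def[of "quot_brace B L"] qfields using assms
  by (simp add: qmul qsub star_eq)

lemma center_char: assumes "a \<in> A"
  shows "bcoset B a L \<in> star_center (quot_brace B L) \<longleftrightarrow> a \<in> Zc L"
proof -
  have c: "bcoset B a L \<in> bcar (quot_brace B L)" using assms qcar by auto
  have e: "(\<forall>Y\<in>bcar (quot_brace B L). P Y) \<longleftrightarrow> (\<forall>b\<in>A. P (bcoset B b L))" for P
    unfolding qcar by auto
  have "bcoset B a L \<in> star_center (quot_brace B L) \<longleftrightarrow>
    (\<forall>x\<in>A. bcoset B (a \<star> x) L = L \<and> bcoset B (x \<star> a) L = L)"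
    unfolding star_center_def using c e[of "\<lambda>Y. star (quot_brace B L) (bcoset B a L) Y = bzero (quot_brace B L) \<and>
        star (quot_brace B L) Y (bcoset B a L) = bzero (quot_brace B L)"] assms
    by (simp add: qstar)
  also have "\<dots> \<longleftrightarrow> a \<in> Zc L" using assms by (simp add: coset_L Zc_def)
  finally show ?thesis .
qed

end

section \<open>Upper central series\<close>

abbreviation zeta where "zeta n \<equiv> upper_star_center B n"

lemma mi_zero[simp]: "mi z0 = z0" using MG.inv_one by simp

lemma zero_ideal: "brace_ideal {z0} B"
proof -
  have "subgroup {z0} (add_group B)"
    by (rule AG.subgroupI) (auto simp: ng_def'[symmetric])
  moreover have "subgroup {z0} (mul_group B)"
    by (rule MG.subgroupI) auto
  ultimately show ?thesis by (simp add: brace_ideal_def subbrace_def)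
qed

lemma Zc_sub: "Zc L \<subseteq> A" by (auto simp: Zc_def)

lemma zeta_Suc_gen: "brace_ideal (zeta n) B \<Longrightarrow> zeta (Suc n) = Zc (zeta n)"
  using center_char Zc_sub by auto

lemma zeta_ideal: "brace_ideal (zeta n) B"
proof (induction n)
  case 0 thus ?case using zero_ideal by simp
next
  case (Suc n) thus ?case using zeta_Suc_gen Zc_ideal by simp
qed

lemma zeta_Suc: "zeta (Suc n) = Zc (zeta n)" using zeta_Suc_gen zeta_ideal by blast

declare upper_star_center.simps(2)[simp del]

lemma zeta_step: "zeta n \<subseteq> zeta (Suc n)" using zeta_Suc L_Zc zeta_ideal by blast

lemma zeta_mono: "m \<le> n \<Longrightarrow> zeta m \<subseteq> zeta n"
  using zeta_step by (rule lift_Suc_mono_le)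

lemma zeta_one: "zeta (Suc 0) = star_center B"
  using zeta_Suc[of 0] by (auto simp: Zc_def star_center_def)

lemma zeta_sub: "zeta n \<subseteq> A" using I_sub zeta_ideal by blast

context fixes H assumes HS: "subbrace H B"
begin
lemma HS_add_sg: "subgroup H (add_group B)" using HS by (simp add: subbrace_def)
lemma HS_mul_sg: "subgroup H (mul_group B)" using HS by (simp add: subbrace_def)
lemma S_in: "h \<in> H \<Longrightarrow> h \<in> A" using subgroup.subset[OF HS_add_sg] by auto
lemma S_zero[simp]: "z0 \<in> H" using subgroup.one_closed[OF HS_add_sg] by simp
lemma S_add: "x \<in> H \<Longrightarrow> y \<in> H \<Longrightarrow> x \<boxplus> y \<in> H" using subgroup.m_closed[OF HS_add_sg] by simp
lemma S_ng: "x \<in> H \<Longrightarrow> ng x \<in> H" using subgroup.m_inv_closed[OF HS_add_sg] by (simp add: ng_def')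
lemma S_mul: "x \<in> H \<Longrightarrow> y \<in> H \<Longrightarrow> x \<boxtimes> y \<in> H" using subgroup.m_closed[OF HS_mul_sg] by simp
lemma S_mi: "x \<in> H \<Longrightarrow> mi x \<in> H" using subgroup.m_inv_closed[OF HS_mul_sg] by simp
lemma S_star: "x \<in> H \<Longrightarrow> y \<in> H \<Longrightarrow> x \<star> y \<in> H" using S_mul S_add S_ng by (simp add: star_eq)
end

lemma ideal_sb: "brace_ideal L B \<Longrightarrow> subbrace L B" by (simp add: brace_ideal_def)

definition sumset where "sumset H L = {h \<boxplus> z | h z. h \<in> H \<and> z \<in> L}"

lemma sumset_subbrace: assumes HS: "subbrace H B" and LI: "brace_ideal L B"
  shows "subbrace (sumset H L) B"
proof -
  have sub: "sumset H L \<subseteq> A" using S_in[OF HS] I_in[OF LI] by (auto simp: sumset_def)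
  have z: "z0 \<in> sumset H L" unfolding sumset_def using S_zero[OF HS] I_zero[OF LI]
    by (intro CollectI exI[of _ z0]) simp
  have "subgroup (sumset H L) (add_group B)"
  proof (rule AG.subgroupI)
    show "sumset H L \<subseteq> carrier (add_group B)" using sub by simp
    show "sumset H L \<noteq> {}" using z by auto
    fix a b assume a: "a \<in> sumset H L" and b: "b \<in> sumset H L"
    then obtain h z h' z' where hz: "a = h \<boxplus> z" "b = h' \<boxplus> z'" "h \<in> H" "z \<in> L" "h' \<in> H" "z' \<in> L"
      unfolding sumset_def by blast
    have A: "h \<in> A" "z \<in> A" "h' \<in> A" "z' \<in> A" using hz S_in[OF HS] I_in[OF LI] by auto
    have "ng a = ng h \<boxplus> ng z" using hz A by simp
    thus "inv\<^bsub>add_group B\<^esub> a \<in> sumset H L" using hz S_ng[OF HS] I_ng[OF LI]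
      unfolding sumset_def ng_def'[symmetric] by blast
    have "a \<boxplus> b = (h \<boxplus> h') \<boxplus> (z \<boxplus> z')" using hz A by (simp add: add_ac)
    thus "a \<otimes>\<^bsub>add_group B\<^esub> b \<in> sumset H L" using hz S_add[OF HS hz(3,5)] I_add[OF LI hz(4,6)]
      unfolding sumset_def by auto
  qed
  moreover have "subgroup (sumset H L) (mul_group B)"
  proof (rule MG.subgroupI)
    show "sumset H L \<subseteq> carrier (mul_group B)" using sub by simp
    show "sumset H L \<noteq> {}" using z by auto
    fix a b assume a: "a \<in> sumset H L" and b: "b \<in> sumset H L"
    then obtain h z h' z' where hz: "a = h \<boxplus> z" "b = h' \<boxplus> z'" "h \<in> H" "z \<in> L" "h' \<in> H" "z' \<in> L"
      unfolding sumset_def by blast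
    have A: "h \<in> A" "z \<in> A" "h' \<in> A" "z' \<in> A" using hz S_in[OF HS] I_in[OF LI] by auto
    obtain c where c: "c \<in> L" "a = h \<boxtimes> c" using I_addmul[OF LI A(1) hz(4)] hz by auto
    obtain c' where c': "c' \<in> L" "b = h' \<boxtimes> c'" using I_addmul[OF LI A(3) hz(6)] hz by auto
    have cA: "c \<in> A" "c' \<in> A" using c c' I_in[OF LI] by auto
    have "a \<boxtimes> b = (h \<boxtimes> h') \<boxtimes> ((mi h' \<boxtimes> c \<boxtimes> h') \<boxtimes> c')"
      using c c' cA A by (simp add: mul_assoc)
    moreover have "(mi h' \<boxtimes> c \<boxtimes> h') \<boxtimes> c' \<in> L" using I_normal[OF LI A(3) c(1)] c' I_mul[OF LI] by simp
    ultimately obtain l where "l \<in> L" "a \<boxtimes> b = h \<boxtimes> h' \<boxplus> l"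
      using I_mulr[OF LI, of "h \<boxtimes> h'"] A by auto
    thus "a \<otimes>\<^bsub>mul_group B\<^esub> b \<in> sumset H L" using S_mul[OF HS hz(3,5)] unfolding sumset_def by auto
    have "mi a = mi c \<boxtimes> mi h" using c cA A MG.inv_mult_group[of h c] by simp
    also have "\<dots> = mi h \<boxtimes> (h \<boxtimes> mi c \<boxtimes> mi h)" using cA A by (simp add: mul_assoc)
    finally have "mi a = mi h \<boxtimes> (h \<boxtimes> mi c \<boxtimes> mi h)" .
    moreover have "h \<boxtimes> mi c \<boxtimes> mi h \<in> L" using I_normal'[OF LI A(1) I_mi[OF LI c(1)]] .
    ultimately obtain l where "l \<in> L" "mi a = mi h \<boxplus> l"
      using I_mulr[OF LI, of "mi h"] A by auto
    thus "inv\<^bsub>mul_group B\<^esub> a \<in> sumset H L" using S_mi[OF HS hz(3)] unfolding sumset_def by auto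
  qed
  ultimately show ?thesis by (simp add: subbrace_def)
qed

lemma restrict_fields[simp]: "badd (restrict_brace B J) = badd B" "bmul (restrict_brace B J) = bmul B"
  "bcar (restrict_brace B J) = J"
  by (simp_all add: restrict_brace_def)
lemma restrict_groups: "add_group (restrict_brace B J) = (add_group B)\<lparr>carrier := J\<rparr>"
  "mul_group (restrict_brace B J) = (mul_group B)\<lparr>carrier := J\<rparr>"
  by (simp_all add: restrict_brace_def add_group_def mul_group_def)

lemma restrict_star: assumes "subgroup J (add_group B)" "x \<in> J" "y \<in> J"
  shows "star (restrict_brace B J) x y = x \<star> y"
proof -
  have n: "bneg (restrict_brace B J) v = ng v" if "v \<in> J" for v
    unfolding bneg_def restrict_groups using AG.m_inv_consistent[OF assms(1) that] .
  show ?thesis unfolding star_def bsub_def restrict_fields using n assms by (simp add: bneg_def)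
qed

lemma ideal_restrict: assumes "subbrace J B" "subbrace I B" "I \<subseteq> J"
  "\<forall>u\<in>J. \<forall>v\<in>I. u \<star> v \<in> I \<and> v \<star> u \<in> I"
shows "brace_ideal I (restrict_brace B J)"
proof -
  have "subbrace I (restrict_brace B J)" unfolding subbrace_def restrict_groups
    using assms AG.subgroup_incl MG.subgroup_incl by (auto simp: subbrace_def)
  moreover have "\<forall>u\<in>J. \<forall>v\<in>I. star (restrict_brace B J) u v \<in> I \<and> star (restrict_brace B J) v u \<in> I"
    using assms restrict_star[of J] by (auto simp: subbrace_def)
  ultimately show ?thesis by (simp add: brace_ideal_def)
qed

lemma chain_step: assumes HS: "subbrace H B" and LI: "brace_ideal L B"
  shows "brace_ideal (sumset H L) (restrict_brace B (sumset H (Zc L)))"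
proof (rule ideal_restrict)
  show "subbrace (sumset H (Zc L)) B" using sumset_subbrace[OF HS Zc_ideal[OF LI]] .
  show "subbrace (sumset H L) B" using sumset_subbrace[OF HS LI] .
  show "sumset H L \<subseteq> sumset H (Zc L)" using L_Zc[OF LI] unfolding sumset_def by blast
  show "\<forall>u\<in>sumset H (Zc L). \<forall>v\<in>sumset H L. u \<star> v \<in> sumset H L \<and> v \<star> u \<in> sumset H L"
  proof (intro ballI)
    fix u v assume "u \<in> sumset H (Zc L)" "v \<in> sumset H L"
    then obtain h z h' z' where hz: "u = h \<boxplus> z" "v = h' \<boxplus> z'" "h \<in> H" "z \<in> Zc L" "h' \<in> H" "z' \<in> L"
      unfolding sumset_def by blast
    have A: "h \<in> A" "z \<in> A" "h' \<in> A" "z' \<in> A" using hz S_in[OF HS] I_in[OF LI] Zc_sub by auto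
    have uA: "u \<in> A" "v \<in> A" using hz A by auto
    obtain l1 where l1: "l1 \<in> L" "u \<star> h' = h \<star> h' \<boxplus> l1" using star_cong[OF LI A(1) A(3) hz(4)] hz by auto
    have "u \<star> v = u \<star> h' \<boxplus> u \<star> z'" using hz star_add_r A uA by simp
    also have "\<dots> = h \<star> h' \<boxplus> (l1 \<boxplus> u \<star> z')" using l1 A uA I_in[OF LI] by (simp add: add_assoc)
    finally have 1: "u \<star> v \<in> sumset H L" using S_star[OF HS hz(3,5)] l1 I_add[OF LI] I_starl[OF LI uA(1) hz(6)]
      unfolding sumset_def by auto
    obtain l2 where l2: "l2 \<in> L" "v \<star> h = h' \<star> h \<boxplus> l2"
      using star_cong[OF LI A(3) A(1)] L_Zc[OF LI] hz by auto
    have vz: "v \<star> z \<in> L" using hz(4) uA by (simp add: Zc_def)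
    have "v \<star> u = v \<star> h \<boxplus> v \<star> z" using hz star_add_r A uA by simp
    also have "\<dots> = h' \<star> h \<boxplus> (l2 \<boxplus> v \<star> z)" using l2 A uA I_in[OF LI] by (simp add: add_assoc)
    finally have 2: "v \<star> u \<in> sumset H L" using S_star[OF HS hz(5,3)] l2 I_add[OF LI] vz
      unfolding sumset_def by auto
    show "u \<star> v \<in> sumset H L \<and> v \<star> u \<in> sumset H L" using 1 2 by simp
  qed
qed

lemma subnormal: assumes T: "T_brace B" and HS: "subbrace H B" and Hn: "H \<subseteq> zeta n"
  shows "brace_ideal H B"
proof -
  have "brace_ideal (sumset H (zeta j)) B" if "j \<le> n" for j
    using that
  proof (induction rule: inc_induct)
    case base
    have "sumset H (zeta n) = zeta n"
    proof
      show "sumset H (zeta n) \<subseteq> zeta n" using Hn I_add[OF zeta_ideal] unfolding sumset_def by blast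
      show "zeta n \<subseteq> sumset H (zeta n)"
      proof
        fix x assume x: "x \<in> zeta n"
        hence "x \<in> A" using zeta_sub[of n] by blast
        hence "x = z0 \<boxplus> x" by simp
        thus "x \<in> sumset H (zeta n)" using x S_zero[OF HS] unfolding sumset_def by blast
      qed
    qed
    thus ?case using zeta_ideal by simp
  next
    case (step j)
    have "brace_ideal (sumset H (zeta j)) (restrict_brace B (sumset H (zeta (Suc j))))"
      using chain_step[OF HS zeta_ideal] zeta_Suc by simp
    thus ?case using T step.IH unfolding T_brace_def by blast
  qed
  hence "brace_ideal (sumset H (zeta 0)) B" by blast
  moreover have "sumset H (zeta 0) = H" using S_in[OF HS] by (force simp: sumset_def)
  ultimately show ?thesis by simp
qed

lemma regroup: "P = M \<boxplus> l \<Longrightarrow> Q = N \<boxplus> m \<Longrightarrow> M \<in> A \<Longrightarrow> l \<in> A \<Longrightarrow> N \<in> A \<Longrightarrow> m \<in> A \<Longrightarrow> S \<in> A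
  \<Longrightarrow> P \<boxplus> Q \<boxplus> S = (M \<boxplus> N) \<boxplus> (l \<boxplus> m \<boxplus> S)"
  by (simp add: add_ac)

lemma shift_lemma: "x \<in> A \<Longrightarrow> y \<in> A \<Longrightarrow> z \<in> A \<Longrightarrow> x \<boxplus> z = (x \<boxplus> y) \<boxplus> (ng y \<boxplus> z)"
  by (simp add: add_assoc)

abbreviation mlt where "mlt (k::int) x \<equiv> x [^]\<^bsub>add_group B\<^esub> k"
abbreviation mp where "mp (k::int) x \<equiv> x [^]\<^bsub>mul_group B\<^esub> k"

lemma mlt_closed[simp]: "x \<in> A \<Longrightarrow> mlt k x \<in> A" using AG.int_pow_closed[of x k] by simp
lemma mp_closed[simp]: "x \<in> A \<Longrightarrow> mp k x \<in> A" using MG.int_pow_closed[of x k] by simp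
lemma mlt_add: "x \<in> A \<Longrightarrow> mlt (i + j) x = mlt i x \<boxplus> mlt j x" using AG.int_pow_mult[of x i j] by simp
lemma mp_add: "x \<in> A \<Longrightarrow> mp (i + j) x = mp i x \<boxtimes> mp j x" using MG.int_pow_mult[of x i j] by simp
lemma mlt_1[simp]: "x \<in> A \<Longrightarrow> mlt 1 x = x" using AG.int_pow_1[of x] by simp
lemma mp_1[simp]: "x \<in> A \<Longrightarrow> mp 1 x = x" using MG.int_pow_1[of x] by simp
lemma mlt_0[simp]: "mlt 0 x = z0" by simp
lemma mp_0[simp]: "mp 0 x = z0" by simp
lemma mlt_neg: "x \<in> A \<Longrightarrow> mlt (- i) x = ng (mlt i x)" using AG.int_pow_neg[of x i] by (simp add: ng_def')
lemma mp_neg: "x \<in> A \<Longrightarrow> mp (- i) x = mi (mp i x)" using MG.int_pow_neg[of x i] by simp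

lemma cyc_eq: "x \<in> A \<Longrightarrow> cyc B x = {mlt k x | k. True}"
  unfolding cyc_def using AG.generate_pow[of x] by simp

context
  fixes L a assumes LI: "brace_ideal L B" and aA: "a \<in> A" and aa: "a \<star> a \<in> L"
begin

lemma mia: "mi a \<star> a \<in> L"
proof -
  have "(mi a \<boxtimes> a) \<star> a = z0" using aA by simp
  hence "mi a \<star> (a \<star> a) \<boxplus> mi a \<star> a \<boxplus> a \<star> a = z0" using star_mul_l[of "mi a" a a] aA by simp
  thus ?thesis using solve_mid[OF LI] aa I_starl[OF LI] aA by simp
qed

lemma mp_star: "mp k a \<star> a \<in> L"
proof (induction k rule: int_induct[where k=0])
  case base thus ?case using aA I_zero[OF LI] by simp
next
  case (step1 i)
  have "mp (i + 1) a = a \<boxtimes> mp i a" using mp_add[OF aA, of 1 i] aA by (simp add: add.commute)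
  hence "mp (i + 1) a \<star> a = a \<star> (mp i a \<star> a) \<boxplus> a \<star> a \<boxplus> mp i a \<star> a"
    using star_mul_l[of a "mp i a" a] aA by simp
  thus ?case using step1 aa I_starl[OF LI] I_add[OF LI] aA by simp
next
  case (step2 i)
  have "mp (i - 1) a = mi a \<boxtimes> mp i a" using mp_add[OF aA, of "-1" i] aA mp_neg[OF aA, of 1] by simp
  hence "mp (i - 1) a \<star> a = mi a \<star> (mp i a \<star> a) \<boxplus> mi a \<star> a \<boxplus> mp i a \<star> a"
    using star_mul_l[of "mi a" "mp i a" a] aA by simp
  thus ?case using step2 mia I_starl[OF LI] I_add[OF LI] aA by simp
qed

lemma mp_mlt: "\<exists>l\<in>L. mp k a = mlt k a \<boxplus> l"
proof (induction k rule: int_induct[where k=0])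
  case base thus ?case using aA I_zero[OF LI] by (intro bexI[of _ z0]) simp_all
next
  case (step1 i)
  then obtain l where l: "l \<in> L" "mp i a = mlt i a \<boxplus> l" by blast
  have lA: "l \<in> A" using l I_in[OF LI] by auto
  have "mp (i + 1) a = mp i a \<boxtimes> a" using mp_add[OF aA, of i 1] aA by simp
  also have "\<dots> = mp i a \<boxplus> a \<boxplus> mp i a \<star> a" using mul_eq aA by simp
  also have "\<dots> = mlt (i + 1) a \<boxplus> (l \<boxplus> mp i a \<star> a)" using l lA aA mlt_add[OF aA, of i 1]
    by (simp add: add_ac)
  finally show ?case using l mp_star I_add[OF LI] by blast
next
  case (step2 i)
  then obtain l where l: "l \<in> L" "mp i a = mlt i a \<boxplus> l" by blast
  have lA: "l \<in> A" using l I_in[OF LI] by auto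
  have m: "mp i a \<star> mi a \<in> L"
  proof -
    have "mp i a \<star> mi a = mp i a \<star> ng a \<boxplus> mp i a \<star> ng (mi a \<star> a)"
      using mi_eq[OF aA] star_add_r aA by (metis mi_closed mp_closed ng_closed star_closed)
    also have "\<dots> = ng (mp i a \<star> a) \<boxplus> ng (mp i a \<star> (mi a \<star> a))" using star_ng_r aA by simp
    finally show ?thesis using mp_star I_ng[OF LI] I_add[OF LI] I_starl[OF LI] mia aA by simp
  qed
  have "mp (i - 1) a = mp i a \<boxtimes> mi a" using mp_add[OF aA, of i "-1"] aA mp_neg[OF aA, of 1] by simp
  also have "\<dots> = mp i a \<boxplus> mi a \<boxplus> mp i a \<star> mi a" using mul_eq aA by simp
  also have "\<dots> = (mlt i a \<boxplus> ng a) \<boxplus> (l \<boxplus> ng (mi a \<star> a) \<boxplus> mp i a \<star> mi a)"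
    by (rule regroup[OF l(2) mi_eq[OF aA]]) (use lA aA in auto)
  also have "mlt i a \<boxplus> ng a = mlt (i - 1) a"
    using mlt_add[OF aA, of i "-1"] mlt_neg[OF aA, of 1] aA by simp
  finally show ?case using l m mia I_add[OF LI] I_ng[OF LI] by blast
qed

lemma span_rep: "q \<in> sumset (cyc B a) L \<longleftrightarrow> (\<exists>k. \<exists>l\<in>L. q = mp k a \<boxtimes> l)"
proof
  assume "q \<in> sumset (cyc B a) L"
  then obtain k l where q: "q = mlt k a \<boxplus> l" "l \<in> L" unfolding sumset_def cyc_eq[OF aA] by blast
  obtain l0 where l0: "l0 \<in> L" "mp k a = mlt k a \<boxplus> l0" using mp_mlt by blast
  have lA: "l \<in> A" "l0 \<in> A" using q l0 I_in[OF LI] by auto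
  have "q = mp k a \<boxplus> (ng l0 \<boxplus> l)" unfolding q(1) l0(2) by (rule shift_lemma) (use lA aA in auto)
  moreover obtain l' where "l' \<in> L" "mp k a \<boxplus> (ng l0 \<boxplus> l) = mp k a \<boxtimes> l'"
    using I_addmul[OF LI mp_closed[OF aA] I_add[OF LI I_ng[OF LI l0(1)] q(2)]] by blast
  ultimately show "\<exists>k. \<exists>l\<in>L. q = mp k a \<boxtimes> l" by auto
next
  assume "\<exists>k. \<exists>l\<in>L. q = mp k a \<boxtimes> l"
  then obtain k l where q: "q = mp k a \<boxtimes> l" "l \<in> L" by blast
  obtain l0 where l0: "l0 \<in> L" "mp k a = mlt k a \<boxplus> l0" using mp_mlt by blast
  obtain l' where l': "l' \<in> L" "q = mp k a \<boxplus> l'" using I_mulr[OF LI, of "mp k a" l] q aA by auto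
  have lA: "l' \<in> A" "l0 \<in> A" using l' l0 I_in[OF LI] by auto
  have "q = mlt k a \<boxplus> (l0 \<boxplus> l')" using l' l0 lA aA by (simp add: add_ac)
  thus "q \<in> sumset (cyc B a) L" using I_add[OF LI] l0 l' unfolding sumset_def cyc_eq[OF aA] by blast
qed

lemma span_subbrace: "subbrace (sumset (cyc B a) L) B"
proof -
  let ?Q = "sumset (cyc B a) L"
  have sub: "?Q \<subseteq> A" using I_in[OF LI] aA unfolding sumset_def cyc_eq[OF aA] by auto
  have "z0 = mp 0 a \<boxtimes> z0" by simp
  hence z: "z0 \<in> ?Q" using span_rep[of z0] I_zero[OF LI] by blast
  have "subgroup ?Q (add_group B)"
  proof (rule AG.subgroupI)
    show "?Q \<subseteq> carrier (add_group B)" using sub by simp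
    show "?Q \<noteq> {}" using z by auto
    fix p q assume "p \<in> ?Q" "q \<in> ?Q"
    then obtain k l k' l' where pq: "p = mlt k a \<boxplus> l" "l \<in> L" "q = mlt k' a \<boxplus> l'" "l' \<in> L"
      unfolding sumset_def cyc_eq[OF aA] by blast
    have lA: "l \<in> A" "l' \<in> A" using pq I_in[OF LI] by auto
    have "ng p = mlt (-k) a \<boxplus> ng l" using pq lA aA mlt_neg by simp
    thus "inv\<^bsub>add_group B\<^esub> p \<in> ?Q" using I_ng[OF LI] pq unfolding sumset_def cyc_eq[OF aA] ng_def'[symmetric] by blast
    have "p \<boxplus> q = mlt (k + k') a \<boxplus> (l \<boxplus> l')" using pq lA aA mlt_add by (simp add: add_ac)
    thus "p \<otimes>\<^bsub>add_group B\<^esub> q \<in> ?Q" using I_add[OF LI] pq unfolding sumset_def cyc_eq[OF aA] by auto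
  qed
  moreover have "subgroup ?Q (mul_group B)"
  proof (rule MG.subgroupI)
    show "?Q \<subseteq> carrier (mul_group B)" using sub by simp
    show "?Q \<noteq> {}" using z by auto
    fix p q assume "p \<in> ?Q" "q \<in> ?Q"
    then obtain k l k' l' where pq: "p = mp k a \<boxtimes> l" "l \<in> L" "q = mp k' a \<boxtimes> l'" "l' \<in> L"
      using span_rep by blast
    have lA: "l \<in> A" "l' \<in> A" using pq I_in[OF LI] by auto
    have "p \<boxtimes> q = mp (k + k') a \<boxtimes> ((mi (mp k' a) \<boxtimes> l \<boxtimes> mp k' a) \<boxtimes> l')"
      using pq lA aA mp_add by (simp add: mul_assoc)
    moreover have "(mi (mp k' a) \<boxtimes> l \<boxtimes> mp k' a) \<boxtimes> l' \<in> L"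
      using I_normal[OF LI, of "mp k' a" l] pq aA I_mul[OF LI] by simp
    ultimately show "p \<otimes>\<^bsub>mul_group B\<^esub> q \<in> ?Q" using span_rep by auto
    have "mi p = mi l \<boxtimes> mi (mp k a)" using pq lA aA MG.inv_mult_group[of "mp k a" l] by simp
    also have "\<dots> = mp (-k) a \<boxtimes> (mp k a \<boxtimes> mi l \<boxtimes> mi (mp k a))" using lA aA mp_neg
      by (simp add: mul_assoc)
    finally have "mi p = mp (-k) a \<boxtimes> (mp k a \<boxtimes> mi l \<boxtimes> mi (mp k a))" .
    moreover have "mp k a \<boxtimes> mi l \<boxtimes> mi (mp k a) \<in> L" using I_normal'[OF LI, of "mp k a" "mi l"] aA I_mi[OF LI] pq by simp
    ultimately show "inv\<^bsub>mul_group B\<^esub> p \<in> ?Q" using span_rep by auto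
  qed
  ultimately show ?thesis by (simp add: subbrace_def)
qed

lemma a_in_span: "a \<in> sumset (cyc B a) L"
proof -
  have "a = mlt 1 a \<boxplus> z0" using aA by simp
  moreover have "mlt 1 a \<in> {mlt k a | k. True}" by blast
  ultimately show ?thesis using I_zero[OF LI] unfolding sumset_def cyc_eq[OF aA] by blast
qed

end

lemma br_subbrace: assumes "a \<in> A" shows "subbrace (br B a) B"
proof -
  let ?F = "{S. subbrace S B \<and> a \<in> S}"
  have AF: "A \<in> ?F" using assms AG.subgroup_self MG.subgroup_self by (simp add: subbrace_def)
  have "subgroup (\<Inter>?F) (add_group B)" by (rule AG.subgroups_Inter) (use AF in \<open>auto simp: subbrace_def\<close>)
  moreover have "subgroup (\<Inter>?F) (mul_group B)" by (rule MG.subgroups_Inter) (use AF in \<open>auto simp: subbrace_def\<close>)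
  ultimately show ?thesis by (simp add: subbrace_def br_def)
qed

lemma br_min: "subbrace S B \<Longrightarrow> a \<in> S \<Longrightarrow> br B a \<subseteq> S" by (auto simp: br_def)
lemma br_mem: "a \<in> A \<Longrightarrow> a \<in> br B a" by (auto simp: br_def)

lemma br_decomp: assumes aA: "a \<in> A" and LI: "brace_ideal (br B (a \<star> a)) B"
  shows "br B a = sumset (cyc B a) (br B (a \<star> a))"
proof
  have aa: "a \<star> a \<in> br B (a \<star> a)" using br_mem aA by simp
  show "br B a \<subseteq> sumset (cyc B a) (br B (a \<star> a))"
    using br_min[OF span_subbrace[OF LI aA aa] a_in_span[OF LI aA aa]] .
  have S: "subbrace (br B a) B" using br_subbrace[OF aA] .
  have aa2: "a \<star> a \<in> br B a" using S_star[OF S] br_mem[OF aA] by blast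
  have sub: "br B (a \<star> a) \<subseteq> br B a" using br_min[OF S aa2] .
  show "sumset (cyc B a) (br B (a \<star> a)) \<subseteq> br B a"
  proof
    fix x assume "x \<in> sumset (cyc B a) (br B (a \<star> a))"
    then obtain k l where x: "x = mlt k a \<boxplus> l" "l \<in> br B (a \<star> a)" unfolding sumset_def cyc_eq[OF aA] by blast
    have "mlt k a \<in> br B a" using AG.subgroup_int_pow_closed[OF HS_add_sg[OF S] br_mem[OF aA]] .
    thus "x \<in> br B a" using x sub S_add[OF S] by blast
  qed
qed

lemma fp_split: assumes "\<forall>i\<in>{1..Suc n}. x i \<in> A"
  shows "finprod (add_group B) x {1..Suc n} = x 1 \<boxplus> finprod (add_group B) (\<lambda>i. x (Suc i)) {1..n}"
proof -
  have e: "{1..Suc n} = insert 1 (Suc ` {1..n})" by (auto simp: image_Suc_atLeastAtMost)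
  have c: "x \<in> Suc ` {1..n} \<rightarrow> carrier (add_group B)" using assms by (auto simp: e)
  have "finprod (add_group B) x {1..Suc n} = x 1 \<boxplus> finprod (add_group B) x (Suc ` {1..n})"
    unfolding e using AG.finprod_insert[of "Suc ` {1..n}" 1 x] c assms by auto
  also have "finprod (add_group B) x (Suc ` {1..n}) = finprod (add_group B) (\<lambda>i. x (Suc i)) {1..n}"
    using AG.finprod_reindex[OF c] by simp
  finally show ?thesis .
qed

lemma cyc_sub: "x \<in> A \<Longrightarrow> cyc B x \<subseteq> A" using cyc_eq by auto

lemma ssum_split: assumes sA: "\<forall>i\<ge>1. s i \<in> A"
  shows "subgroup_sum B (\<lambda>i. cyc B (s i)) {1..Suc n} =
         sumset (cyc B (s 1)) (subgroup_sum B (\<lambda>i. cyc B (s (Suc i))) {1..n})"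
proof
  show "subgroup_sum B (\<lambda>i. cyc B (s i)) {1..Suc n} \<subseteq>
         sumset (cyc B (s 1)) (subgroup_sum B (\<lambda>i. cyc B (s (Suc i))) {1..n})"
  proof
    fix v assume "v \<in> subgroup_sum B (\<lambda>i. cyc B (s i)) {1..Suc n}"
    then obtain x where x: "v = finprod (add_group B) x {1..Suc n}" "\<forall>i\<in>{1..Suc n}. x i \<in> cyc B (s i)"
      unfolding subgroup_sum_def by blast
    have xA: "\<forall>i\<in>{1..Suc n}. x i \<in> A"
    proof
      fix i assume i: "i \<in> {1..Suc n}"
      hence "s i \<in> A" using sA by auto
      thus "x i \<in> A" using cyc_sub x(2) i by blast
    qed
    have "v = x 1 \<boxplus> finprod (add_group B) (\<lambda>i. x (Suc i)) {1..n}" using fp_split[OF xA] x by simp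
    moreover have "finprod (add_group B) (\<lambda>i. x (Suc i)) {1..n} \<in> subgroup_sum B (\<lambda>i. cyc B (s (Suc i))) {1..n}"
      unfolding subgroup_sum_def using x(2) by (intro CollectI exI[of _ "\<lambda>i. x (Suc i)"]) auto
    moreover have "x 1 \<in> cyc B (s 1)" using x(2) by simp
    ultimately show "v \<in> sumset (cyc B (s 1)) (subgroup_sum B (\<lambda>i. cyc B (s (Suc i))) {1..n})"
      unfolding sumset_def by blast
  qed
  show "sumset (cyc B (s 1)) (subgroup_sum B (\<lambda>i. cyc B (s (Suc i))) {1..n}) \<subseteq>
        subgroup_sum B (\<lambda>i. cyc B (s i)) {1..Suc n}"
  proof
    fix v assume "v \<in> sumset (cyc B (s 1)) (subgroup_sum B (\<lambda>i. cyc B (s (Suc i))) {1..n})"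
    then obtain u y where uy: "v = u \<boxplus> finprod (add_group B) y {1..n}" "u \<in> cyc B (s 1)"
      "\<forall>i\<in>{1..n}. y i \<in> cyc B (s (Suc i))"
      unfolding sumset_def subgroup_sum_def by blast
    define x where "x = (\<lambda>i. if i = 1 then u else y (i - 1))"
    have xc: "\<forall>i\<in>{1..Suc n}. x i \<in> cyc B (s i)"
    proof
      fix i assume i: "i \<in> {1..Suc n}"
      show "x i \<in> cyc B (s i)"
      proof (cases "i = 1")
        case True thus ?thesis using uy by (simp add: x_def)
      next
        case False
        hence "i - 1 \<in> {1..n}" "Suc (i - 1) = i" using i by auto
        thus ?thesis using uy False by (metis x_def)
      qed
    qed
    have xA: "\<forall>i\<in>{1..Suc n}. x i \<in> A"
    proof
      fix i assume i: "i \<in> {1..Suc n}"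
      hence "s i \<in> A" using sA by auto
      thus "x i \<in> A" using cyc_sub xc i by blast
    qed
    have yc: "y \<in> {1..n} \<rightarrow> carrier (add_group B)"
    proof
      fix i assume i: "i \<in> {1..n}"
      hence "s (Suc i) \<in> A" using sA by auto
      thus "y i \<in> carrier (add_group B)" using cyc_sub uy(3) i by (simp add: subset_iff)
    qed
    have "finprod (add_group B) (\<lambda>i. x (Suc i)) {1..n} = finprod (add_group B) y {1..n}"
      by (rule AG.finprod_cong'[OF refl yc]) (simp add: x_def)
    hence "v = finprod (add_group B) x {1..Suc n}" using fp_split[OF xA] uy by (simp add: x_def)
    thus "v \<in> subgroup_sum B (\<lambda>i. cyc B (s i)) {1..Suc n}" using xc unfolding subgroup_sum_def by blast
  qed
qed

lemma seq_in: assumes "a \<in> A" "s 1 = a" "\<forall>i\<ge>1. s (Suc i) = s i \<star> s i"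
  shows "\<forall>i\<ge>1. s i \<in> A"
proof (intro allI impI)
  fix i :: nat assume "1 \<le> i"
  thus "s i \<in> A"
  proof (induction i rule: dec_induct)
    case base thus ?case using assms by simp
  next
    case (step i) thus ?case using assms by simp
  qed
qed

lemma zeta0: "zeta 0 = {z0}" by simp

lemma br_zero: "br B z0 = {z0}"
  using br_min[OF ideal_sb[OF zero_ideal], of z0] br_mem[of z0] by auto

lemma main_i: assumes T: "T_brace B"
  shows "\<forall>a s. a \<in> zeta n \<longrightarrow> s 1 = a \<longrightarrow> (\<forall>i\<ge>1. s (Suc i) = s i \<star> s i) \<longrightarrow>
     br B a = subgroup_sum B (\<lambda>i. cyc B (s i)) {1..n}"
proof (induction n)
  case 0
  show ?case
  proof (intro allI impI)
    fix a s assume "a \<in> zeta 0"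
    hence "a = z0" by simp
    moreover have "subgroup_sum B (\<lambda>i. cyc B (s i)) {1..0} = {z0}"
      by (simp add: subgroup_sum_def)
    ultimately show "br B a = subgroup_sum B (\<lambda>i. cyc B (s i)) {1..0}" using br_zero by simp
  qed
next
  case (Suc n)
  show ?case
  proof (intro allI impI)
    fix a s assume a: "a \<in> zeta (Suc n)" and s1: "s 1 = a" and sr: "\<forall>i\<ge>1. s (Suc i) = s i \<star> s i"
    have aA: "a \<in> A" using a zeta_sub by blast
    have aa: "a \<star> a \<in> zeta n" using a aA zeta_Suc by (auto simp: Zc_def)
    have s'1: "s (Suc 1) = a \<star> a" using sr s1 by simp
    have s'r: "\<forall>i\<ge>1. s (Suc (Suc i)) = s (Suc i) \<star> s (Suc i)" using sr by simp
    have IH: "br B (a \<star> a) = subgroup_sum B (\<lambda>i. cyc B (s (Suc i))) {1..n}"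
      using Suc.IH[rule_format, of "a \<star> a" "\<lambda>i. s (Suc i)"] aa s'1 s'r by simp
    have sub: "br B (a \<star> a) \<subseteq> zeta n" using br_min[OF ideal_sb[OF zeta_ideal] aa] .
    have LI: "brace_ideal (br B (a \<star> a)) B"
      using subnormal[OF T br_subbrace sub] aA by simp
    have "br B a = sumset (cyc B a) (br B (a \<star> a))" using br_decomp[OF aA LI] .
    also have "\<dots> = subgroup_sum B (\<lambda>i. cyc B (s i)) {1..Suc n}"
      using ssum_split[OF seq_in[OF aA s1 sr], of n] IH s1 by simp
    finally show "br B a = subgroup_sum B (\<lambda>i. cyc B (s i)) {1..Suc n}" .
  qed
qed

section \<open>Torsion\<close>

abbreviation nm where "nm (m::nat) x \<equiv> x [^]\<^bsub>add_group B\<^esub> m"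

lemma nm_Suc: "x \<in> A \<Longrightarrow> nm (Suc m) x = nm m x \<boxplus> x" using AG.nat_pow_Suc[of x m] by simp
lemma nm_closed[simp]: "x \<in> A \<Longrightarrow> nm m x \<in> A" using AG.nat_pow_closed[of x m] by simp

lemma nm_ideal: "brace_ideal K B \<Longrightarrow> y \<in> K \<Longrightarrow> nm m y \<in> K"
  by (induction m) (auto simp: nm_Suc I_add I_in)

lemma star_nm_r: "x \<in> A \<Longrightarrow> y \<in> A \<Longrightarrow> x \<star> nm m y = nm m (x \<star> y)"
  by (induction m) (simp_all add: nm_Suc star_add_r)

lemma star_add_ZZ: assumes LI: "brace_ideal L B" and a: "a \<in> Zc (Zc L)" and b: "b \<in> Zc (Zc L)" and x: "x \<in> A"
  shows "\<exists>l\<in>L. (a \<boxplus> b) \<star> x = a \<star> x \<boxplus> b \<star> x \<boxplus> l"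
proof -
  have ZI: "brace_ideal (Zc L) B" using Zc_ideal[OF LI] .
  have ZZI: "brace_ideal (Zc (Zc L)) B" using Zc_ideal[OF ZI] .
  have aA: "a \<in> A" and bA: "b \<in> A" using a b Zc_sub by auto
  have c: "mi a \<star> b \<in> Zc L" using b aA by (simp add: Zc_def)
  have b1: "b \<boxplus> mi a \<star> b \<in> Zc (Zc L)" using I_add[OF ZZI b] L_Zc[OF ZI] c by auto
  have b1x: "(b \<boxplus> mi a \<star> b) \<star> x \<in> Zc L" using b1 x by (simp add: Zc_def)
  have axL: "a \<star> ((b \<boxplus> mi a \<star> b) \<star> x) \<in> L" using b1x aA by (simp add: Zc_def)
  obtain l' where l': "l' \<in> L" "(b \<boxplus> mi a \<star> b) \<star> x = b \<star> x \<boxplus> l'" using star_cong[OF LI bA x c] by blast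
  have l'A: "l' \<in> A" using l' I_in[OF LI] by auto
  have "(a \<boxplus> b) \<star> x = a \<star> ((b \<boxplus> mi a \<star> b) \<star> x) \<boxplus> a \<star> x \<boxplus> (b \<boxplus> mi a \<star> b) \<star> x"
    using add_as_mul[OF aA bA] star_mul_l[of a "b \<boxplus> mi a \<star> b" x] aA bA x by simp
  also have "\<dots> = a \<star> x \<boxplus> b \<star> x \<boxplus> (a \<star> ((b \<boxplus> mi a \<star> b) \<star> x) \<boxplus> l')"
    unfolding l'(2) using aA bA x l'A axL I_in[OF LI] by (simp add: add_ac)
  finally show ?thesis using axL l' I_add[OF LI] by blast
qed

lemma star_nm_l: assumes LI: "brace_ideal L B" and a: "a \<in> Zc (Zc L)" and x: "x \<in> A"
  shows "\<exists>l\<in>L. nm m a \<star> x = nm m (a \<star> x) \<boxplus> l"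
proof (induction m)
  case 0 thus ?case using x I_zero[OF LI] by (intro bexI[of _ z0]) simp_all
next
  case (Suc m)
  have ZZI: "brace_ideal (Zc (Zc L)) B" using Zc_ideal[OF Zc_ideal[OF LI]] .
  have aA: "a \<in> A" using a Zc_sub by auto
  obtain l where l: "l \<in> L" "nm m a \<star> x = nm m (a \<star> x) \<boxplus> l" using Suc by blast
  obtain l1 where l1: "l1 \<in> L" "(nm m a \<boxplus> a) \<star> x = nm m a \<star> x \<boxplus> a \<star> x \<boxplus> l1"
    using star_add_ZZ[OF LI nm_ideal[OF ZZI a] a x] by blast
  have lA: "l \<in> A" "l1 \<in> A" using l l1 I_in[OF LI] by auto
  have "nm (Suc m) a \<star> x = nm (Suc m) (a \<star> x) \<boxplus> (l \<boxplus> l1)"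
    using l1 unfolding nm_Suc[OF aA] l(2) using lA aA x by (simp add: nm_Suc add_ac)
  thus ?case using l l1 I_add[OF LI] by blast
qed

lemma eq_move: "a = b \<boxplus> l \<Longrightarrow> b \<in> A \<Longrightarrow> l \<in> A \<Longrightarrow> b = a \<boxplus> ng l"
  by (simp add: add_assoc)

context assumes TF: "add_torsion_free B (star_center B)"
begin

lemma tf_factor: "\<forall>y\<in>zeta (Suc k). \<forall>m>0. nm m y \<in> zeta k \<longrightarrow> y \<in> zeta k"
proof (induction k)
  case 0
  show ?case
  proof (intro ballI allI impI)
    fix y m assume y: "y \<in> zeta (Suc 0)" and m: "0 < m" and ym: "nm m y \<in> zeta 0"
    have "y \<in> star_center B" using y unfolding zeta_one .
    hence "y = z0" using TF m ym unfolding add_torsion_free_def by auto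
    thus "y \<in> zeta 0" by simp
  qed
next
  case (Suc k)
  show ?case
  proof (intro ballI allI impI)
    fix y m assume y: "y \<in> zeta (Suc (Suc k))" and m: "0 < m" and ym: "nm m y \<in> zeta (Suc k)"
    have yA: "y \<in> A" using y zeta_sub by blast
    have y': "y \<in> Zc (Zc (zeta k))" using y zeta_Suc by simp
    have ym': "nm m y \<in> Zc (zeta k)" using ym zeta_Suc by simp
    have "x \<star> y \<in> zeta k \<and> y \<star> x \<in> zeta k" if x: "x \<in> A" for x
    proof
      have xy: "x \<star> y \<in> zeta (Suc k)" using y x by (simp add: zeta_Suc Zc_def)
      have "x \<star> nm m y \<in> zeta k" using ym' x by (simp add: Zc_def)
      hence "nm m (x \<star> y) \<in> zeta k" using star_nm_r[OF x yA] by simp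
      thus "x \<star> y \<in> zeta k" using Suc.IH xy m by blast
      have yx: "y \<star> x \<in> zeta (Suc k)" using y x by (simp add: zeta_Suc Zc_def)
      obtain l where l: "l \<in> zeta k" "nm m y \<star> x = nm m (y \<star> x) \<boxplus> l"
        using star_nm_l[OF zeta_ideal y' x] by blast
      have "nm m y \<star> x \<in> zeta k" using ym' x by (simp add: Zc_def)
      moreover have "nm m (y \<star> x) = nm m y \<star> x \<boxplus> ng l"
      proof -
        have lA: "l \<in> A" using l(1) zeta_sub[of k] by blast
        show ?thesis using eq_move[OF l(2) _ lA] yA x by simp
      qed
      ultimately have "nm m (y \<star> x) \<in> zeta k" using I_add[OF zeta_ideal] I_ng[OF zeta_ideal] l(1) by simp
      thus "y \<star> x \<in> zeta k" using Suc.IH yx m by blast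
    qed
    thus "y \<in> zeta (Suc k)" using yA by (simp add: zeta_Suc Zc_def)
  qed
qed

lemma vanish: "\<forall>a. a \<in> zeta j \<longrightarrow> k \<noteq> 0 \<longrightarrow> mlt k a \<in> br B (a \<star> a) \<longrightarrow> a = z0"
proof (induction j)
  case 0 thus ?case by simp
next
  case (Suc j)
  show ?case
  proof (intro allI impI)
    fix a assume a: "a \<in> zeta (Suc j)" and k: "k \<noteq> 0" and ka: "mlt k a \<in> br B (a \<star> a)"
    have aA: "a \<in> A" using a zeta_sub by blast
    have aa: "a \<star> a \<in> zeta j" using a aA zeta_Suc by (auto simp: Zc_def)
    have "br B (a \<star> a) \<subseteq> zeta j" using br_min[OF ideal_sb[OF zeta_ideal] aa] .
    hence kz: "mlt k a \<in> zeta j" using ka by blast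
    have nz: "nm (nat \<bar>k\<bar>) a \<in> zeta j"
    proof (cases "k > 0")
      case True
      hence "mlt k a = nm (nat \<bar>k\<bar>) a" using int_pow_int[of "add_group B" a "nat k"] by simp
      thus ?thesis using kz by simp
    next
      case False
      hence "mlt (- k) a = nm (nat \<bar>k\<bar>) a" using int_pow_int[of "add_group B" a "nat (-k)"] k by simp
      moreover have "mlt (- k) a = ng (mlt k a)" using mlt_neg[OF aA, of k] by simp
      ultimately show ?thesis using kz I_ng[OF zeta_ideal] by metis
    qed
    have "0 < nat \<bar>k\<bar>" using k by simp
    hence "a \<in> zeta j" using tf_factor[of j, rule_format, OF a _ nz] by blast
    thus "a = z0" using Suc.IH k ka by blast
  qed
qed

lemma main_ii: assumes T: "T_brace B"
  shows "\<forall>a s. a \<in> zeta n \<longrightarrow> s 1 = a \<longrightarrow> (\<forall>i\<ge>1. s (Suc i) = s i \<star> s i) \<longrightarrow>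
     sum_is_direct B (\<lambda>i. cyc B (s i)) {1..n}"
proof (induction n)
  case 0 thus ?case by (simp add: sum_is_direct_def)
next
  case (Suc n)
  show ?case
  proof (intro allI impI)
    fix a s assume a: "a \<in> zeta (Suc n)" and s1: "s 1 = a" and sr: "\<forall>i\<ge>1. s (Suc i) = s i \<star> s i"
    have aA: "a \<in> A" using a zeta_sub by blast
    have aa: "a \<star> a \<in> zeta n" using a aA zeta_Suc by (auto simp: Zc_def)
    have s'1: "s (Suc 1) = a \<star> a" using sr s1 by simp
    have s'r: "\<forall>i\<ge>1. s (Suc (Suc i)) = s (Suc i) \<star> s (Suc i)" using sr by simp
    have brz: "br B (a \<star> a) = subgroup_sum B (\<lambda>i. cyc B (s (Suc i))) {1..n}"
      using main_i[OF T, rule_format, of "a \<star> a" n "\<lambda>i. s (Suc i)"] aa s'1 s'r by simp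
    have IH: "sum_is_direct B (\<lambda>i. cyc B (s (Suc i))) {1..n}"
      using Suc.IH[rule_format, of "a \<star> a" "\<lambda>i. s (Suc i)"] aa s'1 s'r by simp
    have sA: "\<forall>i\<ge>1. s i \<in> A" using seq_in[OF aA s1 sr] .
    show "sum_is_direct B (\<lambda>i. cyc B (s i)) {1..Suc n}"
      unfolding sum_is_direct_def
    proof (intro allI impI)
      fix x assume x: "(\<forall>i\<in>{1..Suc n}. x i \<in> cyc B (s i)) \<and> finprod (add_group B) x {1..Suc n} = z0"
      have xA: "\<forall>i\<in>{1..Suc n}. x i \<in> A"
      proof
        fix i assume i: "i \<in> {1..Suc n}"
        hence "s i \<in> A" using sA by auto
        thus "x i \<in> A" using cyc_sub x i by blast
      qed
      let ?F = "finprod (add_group B) (\<lambda>i. x (Suc i)) {1..n}"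
      have "(\<lambda>i. x (Suc i)) \<in> {1..n} \<rightarrow> carrier (add_group B)" using xA by auto
      hence FA: "?F \<in> A" using AG.finprod_closed by simp
      have sum0: "x 1 \<boxplus> ?F = z0" using fp_split[OF xA] x by simp
      have Fin: "?F \<in> br B (a \<star> a)" unfolding brz subgroup_sum_def using x
        by (intro CollectI exI[of _ "\<lambda>i. x (Suc i)"]) auto
      have x1: "x 1 = ng ?F" using inv_unique[OF _ FA sum0] xA by simp
      have x1b: "x 1 \<in> br B (a \<star> a)" using x1 S_ng[OF br_subbrace Fin] aA by simp
      have "x 1 \<in> cyc B a" using x s1 by auto
      then obtain k where k: "x 1 = mlt k a" using cyc_eq[OF aA] by auto
      have x10: "x 1 = z0"
      proof (cases "k = 0")
        case True thus ?thesis using k by simp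
      next
        case False
        have "mlt k a \<in> br B (a \<star> a)" using x1b k by simp
        hence "a = z0" using vanish[where j="Suc n" and k=k, rule_format, OF a False] by blast
        thus ?thesis using k AG.int_pow_one[of k] by simp
      qed
      have F0: "?F = z0" using sum0 x10 FA by simp
      have "(\<forall>i\<in>{1..n}. x (Suc i) \<in> cyc B (s (Suc i))) \<and> ?F = z0" using x F0 by auto
      hence "\<forall>i\<in>{1..n}. x (Suc i) = z0"
        using IH[unfolded sum_is_direct_def, THEN spec[of _ "\<lambda>i. x (Suc i)"]] by blast
      thus "\<forall>i\<in>{1..Suc n}. x i = z0" using x10
        by (metis Suc_le_D atLeastAtMost_iff le_antisym not_less_eq_eq Suc_le_mono nat_le_linear One_nat_def)
    qed
  qed
qed

end

end

theorem lemma3p5: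
  fixes B :: "('a, 'b) brace_struct_scheme" and a :: 'a and n :: nat
    and s :: "nat \<Rightarrow> 'a"
  assumes "is_brace B" and "T_brace B"
    and "a \<in> upper_star_center B n"
    and "s 1 = a"
    and "\<forall>i\<ge>1. s (Suc i) = star B (s i) (s i)"
  shows "brace_ideal (br B a) B
         \<and> br B a = subgroup_sum B (\<lambda>i. cyc B (s i)) {1..n}
         \<and> (add_torsion_free B (star_center B)
              \<longrightarrow> br B a = subgroup_sum B (\<lambda>i. cyc B (s i)) {1..n}
                  \<and> sum_is_direct B (\<lambda>i. cyc B (s i)) {1..n})"
proof -
  interpret brace_loc B by (rule brace_loc.intro) (rule assms(1))
  have aA: "a \<in> bcar B" using assms(3) zeta_sub by blast
  have eq: "br B a = subgroup_sum B (\<lambda>i. cyc B (s i)) {1..n}"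
    using main_i[OF assms(2), THEN spec[of _ a], THEN spec[of _ s]] assms(3-5) by blast
  have id: "brace_ideal (br B a) B"
    using subnormal[OF assms(2) br_subbrace[OF aA] br_min[OF ideal_sb[OF zeta_ideal] assms(3)]] .
  have dir: "add_torsion_free B (star_center B) \<longrightarrow> sum_is_direct B (\<lambda>i. cyc B (s i)) {1..n}"
    using main_ii[OF _ assms(2), THEN spec[of _ a], THEN spec[of _ s]] assms(3-5) by blast
  show ?thesis using eq id dir by blast
qed

end
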